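(* Let $G=(A\cup B,E)$ be a bipartite graph, let $\sigma_A=(a_1,\ldots,a_n)$ be an ordering of $A$ and $\sigma_B=(b_1,\ldots,b_m)$ an ordering of $B$. Let $H$ be the directed graph with vertex set $A\cup B$ and the following arcs: $a_{i-1}\to a_i$ for $2\le i\le n$; $b_{p-1}\to b_p$ for $2\le p\le m$; $a_i\to b_p$ whenever $a_ib_p\in E$; and $b_p\to a_j$ whenever there exist indices $i<j$ and $p<q$ with $a_ib_p\in E$, $a_jb_q\in E$ and $a_jb_p\notin E$. Then $G$ admits a Stick representation respecting $\sigma_A$ and $\sigma_B$ if and only if $H$ is acyclic.
   Context: A Stick representation of a bipartite graph $G=(A\cup B,E)$ (with $A$ horizontal and $B$ vertical) assigns to each vertex of $A$ a horizontal segment and to each vertex of $B$ a vertical segment such that the left endpoints of all horizontal segments and the bottom endpoints of all vertical segments lie on a fixed ground line $\ell$ of slope $-1$ (with the segments lying on the side of $\ell$ into which they extend rightward/upward), and a horizontal and a vertical segment intersect if and only if the corresponding vertices are adjacent in $G$. The representation respects $\sigma_A$ and $\sigma_B$ if, ordering the points where segments touch $\ell$ from left to right, the $i$th horizontal segment corresponds to the $i$th vertex of $\sigma_A$ and the $j$th vertical segment corresponds to the $j$th vertex of $\sigma_B$. *)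

theory Defs
  imports Complex_Main
begin

text \<open>Ground line: the line y = -x (slope -1) in the plane real \<times> real.
  A point of the ground line is determined by its x-coordinate c, namely (c, -c).\<close>

definition hseg :: "real \<Rightarrow> real \<Rightarrow> (real \<times> real) set" where
  "hseg c len = {(t, - c) | t. c \<le> t \<and> t \<le> c + len}"

definition vseg :: "real \<Rightarrow> real \<Rightarrow> (real \<times> real) set" where
  "vseg c len = {(c, s) | s. - c \<le> s \<and> s \<le> - c + len}"

text \<open>sa, sb: the orderings sigma_A, sigma_B (0-indexed lists); E: edge set, pairs (a,b)
  with a in A, b in B. x v: x-coordinate of the ground-line point of the segment of v;
  len v: its length.\<close>

definition stick_rep ::
  "'v list \<Rightarrow> 'v list \<Rightarrow> ('v \<times> 'v) set \<Rightarrow> ('v \<Rightarrow> real) \<Rightarrow> ('v \<Rightarrow> real) \<Rightarrow> bool" where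
  "stick_rep sa sb E x len \<longleftrightarrow>
     (\<forall>v \<in> set sa \<union> set sb. len v > 0) \<and>
     inj_on x (set sa \<union> set sb) \<and>
     (\<forall>a \<in> set sa. \<forall>b \<in> set sb.
        ((a, b) \<in> E \<longleftrightarrow> hseg (x a) (len a) \<inter> vseg (x b) (len b) \<noteq> {}))"

definition respects_orders :: "'v list \<Rightarrow> 'v list \<Rightarrow> ('v \<Rightarrow> real) \<Rightarrow> bool" where
  "respects_orders sa sb x \<longleftrightarrow>
     (\<forall>i j. i < j \<and> j < length sa \<longrightarrow> x (sa ! i) < x (sa ! j)) \<and>
     (\<forall>p q. p < q \<and> q < length sb \<longrightarrow> x (sb ! p) < x (sb ! q))"

definition H_arcs :: "'v list \<Rightarrow> 'v list \<Rightarrow> ('v \<times> 'v) set \<Rightarrow> ('v \<times> 'v) set" where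
  "H_arcs sa sb E =
     {(sa ! (i - 1), sa ! i) | i. 1 \<le> i \<and> i < length sa} \<union>
     {(sb ! (p - 1), sb ! p) | p. 1 \<le> p \<and> p < length sb} \<union>
     E \<union>
     {(sb ! p, sa ! j) | p j. \<exists>i q. i < j \<and> p < q \<and> j < length sa \<and> q < length sb \<and>
         (sa ! i, sb ! p) \<in> E \<and> (sa ! j, sb ! q) \<in> E \<and> (sa ! j, sb ! p) \<notin> E}"

end

theory Submission
  imports Defs
begin

lemma inter_iff:
  "hseg c l \<inter> vseg d m \<noteq> {} \<longleftrightarrow> c \<le> d \<and> d - c \<le> l \<and> d - c \<le> m"
proof
  assume "hseg c l \<inter> vseg d m \<noteq> {}"
  then show "c \<le> d \<and> d - c \<le> l \<and> d - c \<le> m"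
    unfolding hseg_def vseg_def by auto
next
  assume "c \<le> d \<and> d - c \<le> l \<and> d - c \<le> m"
  then have "(d, - c) \<in> hseg c l \<inter> vseg d m"
    unfolding hseg_def vseg_def by auto
  then show "hseg c l \<inter> vseg d m \<noteq> {}" by blast
qed

lemma H_sub:
  assumes "E \<subseteq> set sa \<times> set sb"
  shows "H_arcs sa sb E \<subseteq> (set sa \<union> set sb) \<times> (set sa \<union> set sb)"
  using assms unfolding H_arcs_def by auto

lemma trancl_less:
  fixes f :: "'a \<Rightarrow> real"
  assumes "\<And>u v. (u,v) \<in> R \<Longrightarrow> f u < f v" "(u,v) \<in> R\<^sup>+"
  shows "f u < f v"
  using assms(2) by (induction rule: trancl_induct) (auto dest: assms(1))

lemma chain_trancl:
  assumes "\<And>i. Suc i < length xs \<Longrightarrow> (xs!i, xs!Suc i) \<in> R" "i < j" "j < length xs"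
  shows "(xs!i, xs!j) \<in> R\<^sup>+"
  using assms(2,3)
proof (induction j)
  case 0 then show ?case by simp
next
  case (Suc j)
  have a: "(xs!j, xs!Suc j) \<in> R" using assms(1) Suc.prems by simp
  show ?case
  proof (cases "i = j")
    case True then show ?thesis using a by simp
  next
    case False
    then have "(xs!i, xs!j) \<in> R\<^sup>+" using Suc by simp
    then show ?thesis using a by simp
  qed
qed

theorem lemma1:
  fixes sa sb :: "'v list" and E :: "('v \<times> 'v) set"
  assumes "distinct sa" and "distinct sb" and "set sa \<inter> set sb = {}"
    and "E \<subseteq> set sa \<times> set sb"
  shows "(\<exists>(x :: 'v \<Rightarrow> real) len. stick_rep sa sb E x len \<and> respects_orders sa sb x)
         \<longleftrightarrow> acyclic (H_arcs sa sb E)"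
proof
  assume "\<exists>(x :: 'v \<Rightarrow> real) len. stick_rep sa sb E x len \<and> respects_orders sa sb x"
  then obtain x :: "'v \<Rightarrow> real" and len where st: "stick_rep sa sb E x len"
    and ro: "respects_orders sa sb x" by blast
  have pos: "\<And>v. v \<in> set sa \<union> set sb \<Longrightarrow> len v > 0"
    and inj: "inj_on x (set sa \<union> set sb)"
    and edge: "\<And>a b. a \<in> set sa \<Longrightarrow> b \<in> set sb \<Longrightarrow>
        (a, b) \<in> E \<longleftrightarrow> x a \<le> x b \<and> x b - x a \<le> len a \<and> x b - x a \<le> len b"
    using st unfolding stick_rep_def inter_iff by auto
  have roa: "\<And>i j. i < j \<Longrightarrow> j < length sa \<Longrightarrow> x (sa!i) < x (sa!j)"
    and rob: "\<And>i j. i < j \<Longrightarrow> j < length sb \<Longrightarrow> x (sb!i) < x (sb!j)"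
    using ro unfolding respects_orders_def by auto
  have arcs: "x u < x v" if uv: "(u,v) \<in> H_arcs sa sb E" for u v
  proof -
    consider (A) i where "u = sa!(i-1)" "v = sa!i" "1 \<le> i" "i < length sa"
      | (B) i where "u = sb!(i-1)" "v = sb!i" "1 \<le> i" "i < length sb"
      | (C) "(u,v) \<in> E"
      | (D) p j i q where "u = sb!p" "v = sa!j" "i < j" "p < q" "j < length sa" "q < length sb"
          "(sa ! i, sb ! p) \<in> E" "(sa ! j, sb ! q) \<in> E" "(sa ! j, sb ! p) \<notin> E"
      using uv unfolding H_arcs_def by blast
    then show ?thesis
    proof cases
      case A then show ?thesis using roa[of "i-1" i] by simp
    next
      case B then show ?thesis using rob[of "i-1" i] by simp
    next
      case C
      then have uv': "u \<in> set sa" "v \<in> set sb" using assms(4) by auto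
      then have "u \<noteq> v" using assms(3) by auto
      then have "x u \<noteq> x v" using inj uv' by (auto dest: inj_onD)
      then show ?thesis using edge[OF uv'] C by auto
    next
      case D
      have ij: "x (sa!i) < x (sa!j)" using roa D by simp
      have pq: "x (sb!p) < x (sb!q)" using rob D by simp
      have mem: "sa!i \<in> set sa" "sa!j \<in> set sa" "sb!p \<in> set sb" "sb!q \<in> set sb"
        using D by auto
      have e1: "x (sb!p) - x (sa!i) \<le> len (sb!p)" using edge[OF mem(1,3)] D by auto
      have e2: "x (sb!q) - x (sa!j) \<le> len (sa!j)" using edge[OF mem(2,4)] D by auto
      show ?thesis
      proof (rule ccontr)
        assume "\<not> x u < x v"
        then have "x (sa!j) \<le> x (sb!p)" using D by simp
        then have "(sa!j, sb!p) \<in> E" using edge[OF mem(2,3)] ij pq e1 e2 by auto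
        then show False using D by simp
      qed
    qed
  qed
  show "acyclic (H_arcs sa sb E)"
    unfolding acyclic_def
  proof
    fix u
    show "(u,u) \<notin> (H_arcs sa sb E)\<^sup>+"
      using trancl_less[of "H_arcs sa sb E" x u u] arcs by auto
  qed
next
  assume acy: "acyclic (H_arcs sa sb E)"
  define R where "R = H_arcs sa sb E"
  define V where "V = set sa \<union> set sb"
  have RV: "R \<subseteq> V \<times> V" unfolding R_def V_def using H_sub[OF assms(4)] .
  have RVt: "R\<^sup>+ \<subseteq> V \<times> V" using trancl_subset_Sigma[OF RV] .
  have finV: "finite V" unfolding V_def by simp
  obtain f n where fV: "f ` V = {i::nat. i < n}" and finj: "inj_on f V"
    using finite_imp_inj_to_nat_seg[OF finV] by blast
  define P where "P v = {u. (u,v) \<in> R\<^sup>+}" for v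
  have finP: "finite (P v)" for v
    using RVt finV unfolding P_def by (auto intro: finite_subset)
  define x :: "'v \<Rightarrow> real" where "x v = real (card (P v) * n + f v)" for v
  have Pless: "card (P u) < card (P v)" if "(u,v) \<in> R" for u v
  proof -
    have "insert u (P u) \<subseteq> P v" using that unfolding P_def by auto
    moreover have "u \<notin> P u" using acy unfolding P_def R_def acyclic_def by auto
    ultimately have "P u \<subset> P v" by auto
    then show ?thesis using finP psubset_card_mono by blast
  qed
  have arc: "x u < x v" if "(u,v) \<in> R" for u v
  proof -
    have "u \<in> V" using that RV by auto
    then have "f u < n" using fV by auto
    moreover have "card (P u) + 1 \<le> card (P v)" using Pless[OF that] by simp
    then have "(card (P u) + 1) * n \<le> card (P v) * n" by (rule mult_right_mono) simp
    ultimately have "card (P u) * n + f u < card (P v) * n + f v" by (simp add: algebra_simps)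
    then show ?thesis unfolding x_def by (simp only: of_nat_less_iff)
  qed
  have arct: "x u < x v" if "(u,v) \<in> R\<^sup>+" for u v
    using trancl_less[of R x u v] arc that by blast
  have roa: "x (sa!i) < x (sa!j)" if "i < j" "j < length sa" for i j
  proof -
    have "(sa!i, sa!j) \<in> R\<^sup>+"
    proof (rule chain_trancl[OF _ that])
      fix k assume "Suc k < length sa"
      then show "(sa!k, sa!Suc k) \<in> R" unfolding R_def H_arcs_def
        by (auto intro!: exI[of _ "Suc k"])
    qed
    then show ?thesis using arct by blast
  qed
  have rob: "x (sb!i) < x (sb!j)" if "i < j" "j < length sb" for i j
  proof -
    have "(sb!i, sb!j) \<in> R\<^sup>+"
    proof (rule chain_trancl[OF _ that])
      fix k assume "Suc k < length sb"
      then show "(sb!k, sb!Suc k) \<in> R" unfolding R_def H_arcs_def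
        by (auto intro!: exI[of _ "Suc k"])
    qed
    then show ?thesis using arct by blast
  qed
  have injx: "inj_on x V"
  proof (rule inj_onI)
    fix u v assume uv: "u \<in> V" "v \<in> V" "x u = x v"
    then have fu: "f u < n" "f v < n" using fV by auto
    have eq: "card (P u) * n + f u = card (P v) * n + f v" using uv(3) unfolding x_def by (simp only: of_nat_eq_iff)
    have "(card (P u) * n + f u) mod n = f u" using fu by simp
    moreover have "(card (P v) * n + f v) mod n = f v" using fu by simp
    ultimately have "f u = f v" using eq by simp
    then show "u = v" using finj uv by (auto dest: inj_onD)
  qed
  have xint: "\<exists>k::nat. x v = real k" for v unfolding x_def by blast
  define len where "len v = (if v \<in> set sa then Max (insert (1/2) ((\<lambda>b. x b - x v) ` {b. (v,b) \<in> E}))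
      else Max (insert (1/2) ((\<lambda>a. x v - x a) ` {a. (a,v) \<in> E})))" for v
  have finE: "finite E" using assms(4) finite_subset by blast
  have finA: "finite ((\<lambda>b. x b - x v) ` {b. (v,b) \<in> E})" for v
  proof -
    have "{b. (v,b) \<in> E} \<subseteq> snd ` E" by force
    then show ?thesis using finE by (auto intro: finite_subset)
  qed
  have finB: "finite ((\<lambda>a. x v - x a) ` {a. (a,v) \<in> E})" for v
  proof -
    have "{a. (a,v) \<in> E} \<subseteq> fst ` E" by force
    then show ?thesis using finE by (auto intro: finite_subset)
  qed
  have lenA: "len a = Max (insert (1/2) ((\<lambda>b. x b - x a) ` {b. (a,b) \<in> E}))" if "a \<in> set sa" for a
    using that unfolding len_def by simp
  have lenB: "len b = Max (insert (1/2) ((\<lambda>a. x b - x a) ` {a. (a,b) \<in> E}))" if "b \<in> set sb" for b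
    using that assms(3) unfolding len_def by auto
  have st: "stick_rep sa sb E x len"
    unfolding stick_rep_def inter_iff
  proof (intro conjI ballI)
    fix v assume v: "v \<in> set sa \<union> set sb"
    show "len v > 0"
    proof (cases "v \<in> set sa")
      case True
      have "1/2 \<le> len v" unfolding lenA[OF True] using finA by (intro Max_ge) auto
      then show ?thesis by simp
    next
      case False
      then have "v \<in> set sb" using v by simp
      have "1/2 \<le> len v" unfolding lenB[OF \<open>v \<in> set sb\<close>] using finB by (intro Max_ge) auto
      then show ?thesis by simp
    qed
  next
    show "inj_on x (set sa \<union> set sb)" using injx unfolding V_def .
  next
    fix a b assume a: "a \<in> set sa" and b: "b \<in> set sb"
    show "(a, b) \<in> E \<longleftrightarrow> x a \<le> x b \<and> x b - x a \<le> len a \<and> x b - x a \<le> len b"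
    proof
      assume e: "(a,b) \<in> E"
      then have "(a,b) \<in> R" unfolding R_def H_arcs_def by blast
      then have "x a < x b" using arc by blast
      moreover have "x b - x a \<le> len a" unfolding lenA[OF a] using finA e by (intro Max_ge) auto
      moreover have "x b - x a \<le> len b" unfolding lenB[OF b] using finB e by (intro Max_ge) auto
      ultimately show "x a \<le> x b \<and> x b - x a \<le> len a \<and> x b - x a \<le> len b" by simp
    next
      assume h: "x a \<le> x b \<and> x b - x a \<le> len a \<and> x b - x a \<le> len b"
      show "(a,b) \<in> E"
      proof (rule ccontr)
        assume ne: "(a,b) \<notin> E"
        have "a \<noteq> b" using a b assms(3) by auto
        then have "x a \<noteq> x b" using injx a b unfolding V_def by (auto dest: inj_onD)
        moreover obtain ka kb where "x a = real ka" "x b = real kb" using xint by metis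
        ultimately have d1: "x b - x a \<ge> 1" using h by auto
        have "len a \<in> insert (1/2) ((\<lambda>b. x b - x a) ` {b. (a,b) \<in> E})"
          unfolding lenA[OF a] using finA by (intro Max_in) auto
        moreover have "len a \<noteq> 1/2" using h d1 by auto
        ultimately obtain b' where b': "(a,b') \<in> E" "len a = x b' - x a" by auto
        have "len b \<in> insert (1/2) ((\<lambda>a. x b - x a) ` {a. (a,b) \<in> E})"
          unfolding lenB[OF b] using finB by (intro Max_in) auto
        moreover have "len b \<noteq> 1/2" using h d1 by auto
        ultimately obtain a' where a': "(a',b) \<in> E" "len b = x b - x a'" by auto
        have xb: "x b \<le> x b'" using h b' by simp
        have xa: "x a' \<le> x a" using h a' by simp
        have b'm: "b' \<in> set sb" and a'm: "a' \<in> set sa" using a' b' assms(4) by auto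
        obtain j where j: "j < length sa" "a = sa!j" using a by (metis in_set_conv_nth)
        obtain i where i: "i < length sa" "a' = sa!i" using a'm by (metis in_set_conv_nth)
        obtain p where p: "p < length sb" "b = sb!p" using b by (metis in_set_conv_nth)
        obtain q where q: "q < length sb" "b' = sb!q" using b'm by (metis in_set_conv_nth)
        have "i \<noteq> j" using a' ne i j by auto
        have "i < j"
        proof (rule ccontr)
          assume "\<not> i < j" then have "j < i" using \<open>i \<noteq> j\<close> by simp
          then show False using roa[of j i] i j xa by simp
        qed
        have "p \<noteq> q" using b' ne p q by auto
        have "p < q"
        proof (rule ccontr)
          assume "\<not> p < q" then have "q < p" using \<open>p \<noteq> q\<close> by simp
          then show False using rob[of q p] p q xb by simp
        qed
        have "(b, a) \<in> R" unfolding R_def H_arcs_def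
          using \<open>i < j\<close> \<open>p < q\<close> i j p q a' b' ne by blast
        then have "x b < x a" using arc by blast
        then show False using h by simp
      qed
    qed
  qed
  have "respects_orders sa sb x" unfolding respects_orders_def using roa rob by blast
  then show "\<exists>(x :: 'v \<Rightarrow> real) len. stick_rep sa sb E x len \<and> respects_orders sa sb x"
    using st by blast
qed

end
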